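(* For $\epsilon \in [0,1)$, let $H_\epsilon$ be the solution of $$H_\epsilon''(t) = (\epsilon - Q(t)^2)H_\epsilon(t), \quad t > 0, \qquad H_\epsilon(0) = 0,\ H_\epsilon'(0) = -1.$$ Then $H_\epsilon$ changes its sign at least once on $(0,\infty)$. Moreover, its first positive zero $\tau_\epsilon$ satisfies $\tau_\epsilon \ge \tau_0 > 0$, where $\tau_0$ is the first positive zero of $H_0$ (the solution for $\epsilon = 0$).
   Context: $Q(t)$, $t\ge 0$, denotes the radial profile of the positive radial ground state of $\Delta\phi - \phi + |\phi|^2\phi = 0$ on $\mathbb{R}^3$; it solves $-Q'' - \frac{2}{t}Q' + Q - Q^3 = 0$. *)

theory Defs
  imports "HOL-Analysis.Analysis"
begin

text \<open>Q is the radial profile of the positive radial ground state of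
  Delta phi - phi + phi^3 = 0 on R^3: a positive solution of
  -Q'' - (2/t) Q' + Q - Q^3 = 0 on (0,oo), smooth at the origin (Q'(0) = 0),
  vanishing at infinity. (Such a solution is unique.)\<close>
definition is_ground_state_profile :: "(real \<Rightarrow> real) \<Rightarrow> (real \<Rightarrow> real) \<Rightarrow> bool" where
  "is_ground_state_profile Q Q' \<longleftrightarrow>
     (\<forall>t\<ge>0. (Q has_real_derivative Q' t) (at t within {0..})) \<and>
     continuous_on {0..} Q' \<and>
     Q' 0 = 0 \<and>
     (\<forall>t>0. \<exists>Q''. (Q' has_real_derivative Q'') (at t) \<and>
              - Q'' - (2 / t) * Q' t + Q t - (Q t)^3 = 0) \<and>
     (\<forall>t\<ge>0. Q t > 0) \<and>
     (Q \<longlongrightarrow> 0) at_top"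

definition solves_H :: "(real \<Rightarrow> real) \<Rightarrow> real \<Rightarrow> (real \<Rightarrow> real) \<Rightarrow> (real \<Rightarrow> real) \<Rightarrow> bool" where
  "solves_H Q eps H H' \<longleftrightarrow>
     (\<forall>t\<ge>0. (H has_real_derivative H' t) (at t within {0..})) \<and>
     (\<forall>t>0. (H' has_real_derivative (eps - (Q t)^2) * H t) (at t)) \<and>
     H 0 = 0 \<and> H' 0 = -1"

definition first_pos_zero :: "(real \<Rightarrow> real) \<Rightarrow> real \<Rightarrow> bool" where
  "first_pos_zero f \<tau> \<longleftrightarrow> \<tau> > 0 \<and> f \<tau> = 0 \<and> (\<forall>s. 0 < s \<and> s < \<tau> \<longrightarrow> f s \<noteq> 0)"

end

theory Submission
  imports Defs
begin


lemma deriv_at_pos: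
  assumes "(f has_real_derivative D) (at t within {0..})" "t > 0"
  shows "(f has_real_derivative D) (at t)"
proof -
  have "(f has_real_derivative D) (at t within {0<..})"
    by (rule DERIV_subset[OF assms(1)]) auto
  then show ?thesis using at_within_open[of t "{0<..}"] assms(2) by simp
qed

lemma bounded_on_compact:
  fixes g :: "real \<Rightarrow> real"
  assumes "continuous_on {a..b} g"
  shows "\<exists>K. \<forall>x\<in>{a..b}. \<bar>g x\<bar> \<le> K"
proof -
  have "bounded (g ` {a..b})"
    by (rule compact_imp_bounded[OF compact_continuous_image[OF assms]]) simp
  then show ?thesis unfolding bounded_iff by auto
qed

lemma solves_cont:
  assumes "solves_H Q eps H H'"
  shows "continuous_on {0..} H"
  using assms unfolding solves_H_def by (intro DERIV_continuous_on) auto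

lemma gs_cont:
  assumes "is_ground_state_profile Q Q'"
  shows "continuous_on {0..} Q"
  using assms unfolding is_ground_state_profile_def by (intro DERIV_continuous_on) auto

lemma neg_near0:
  assumes "solves_H Q eps H H'"
  shows "\<exists>s0>0. \<forall>t. 0 < t \<and> t < s0 \<longrightarrow> H t < 0"
proof -
  have d: "(H has_real_derivative -1) (at 0 within {0..})" and h0: "H 0 = 0"
    using assms unfolding solves_H_def by auto
  have "(H has_real_derivative -1) (at 0 within {0<..})"
    by (rule DERIV_subset[OF d]) auto
  then have "((\<lambda>t. (H t - H 0) / (t - 0)) \<longlongrightarrow> -1) (at 0 within {0<..})"
    using DERIV_def has_field_derivative_iff by blast
  then have "eventually (\<lambda>t. (H t - H 0) / (t - 0) < 0) (at_right 0)"
    by (intro order_tendstoD) auto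
  then obtain s0 where s0: "s0 > 0" "\<And>t. 0 < t \<Longrightarrow> t < s0 \<Longrightarrow> H t / t < 0"
    unfolding eventually_at_right_field h0 by auto
  show ?thesis
  proof (intro exI[of _ s0] conjI allI impI)
    fix t assume "0 < t \<and> t < s0"
    with s0(2)[of t] show "H t < 0" by (simp add: divide_less_0_iff)
  qed (use s0 in auto)
qed

lemma H'_bounded:
  assumes "solves_H Q eps H H'" "continuous_on {0..} Q"
  shows "\<exists>B. \<forall>t. 0 < t \<and> t \<le> 1 \<longrightarrow> \<bar>H' t\<bar> \<le> B"
proof -
  have cH: "continuous_on {0..} H" by (rule solves_cont[OF assms(1)])
  have "continuous_on {0..1} (\<lambda>z. (eps - (Q z)^2) * H z)"
    by (intro continuous_intros continuous_on_subset[OF cH] continuous_on_subset[OF assms(2)]) auto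
  then obtain K where K: "\<And>z. z \<in> {0..1} \<Longrightarrow> \<bar>(eps - (Q z)^2) * H z\<bar> \<le> K"
    using bounded_on_compact by blast
  have dH': "\<And>z. z > 0 \<Longrightarrow> (H' has_real_derivative (eps - (Q z)^2) * H z) (at z)"
    using assms(1) unfolding solves_H_def by auto
  show ?thesis
  proof (intro exI[of _ "\<bar>H' 1\<bar> + K"] allI impI)
    fix t :: real assume t: "0 < t \<and> t \<le> 1"
    show "\<bar>H' t\<bar> \<le> \<bar>H' 1\<bar> + K"
    proof (cases "t = 1")
      case True
      have "0 \<le> K" using K[of 1] by auto
      then show ?thesis using True by simp
    next
      case False
      then have "t < 1" using t by auto
      then obtain z where z: "t < z" "z < 1" "H' 1 - H' t = (1 - t) * ((eps - (Q z)^2) * H z)"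
        using MVT2[of t 1 H' "\<lambda>z. (eps - (Q z)^2) * H z"] dH' t by force
      have "\<bar>(1 - t) * ((eps - (Q z)^2) * H z)\<bar> \<le> 1 * K"
        unfolding abs_mult using K[of z] z t
        by (intro mult_mono) auto
      then show ?thesis using z(3) by linarith
    qed
  qed
qed



lemma sign_change:
  assumes gs: "is_ground_state_profile Q Q'"
    and e0: "0 \<le> eps" and e1: "eps < 1"
    and sH: "solves_H Q eps H H'"
  shows "\<exists>b>0. H b > 0"
proof (rule ccontr)
  assume "\<not> ?thesis"
  then have Hle: "\<And>t. t > 0 \<Longrightarrow> H t \<le> 0" by (meson not_le)
  obtain s0 where s0: "s0 > 0" and neg: "\<And>t. 0 < t \<Longrightarrow> t < s0 \<Longrightarrow> H t < 0"
    using neg_near0[OF sH] by blast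
  have dQ: "\<And>t. t \<ge> 0 \<Longrightarrow> (Q has_real_derivative Q' t) (at t within {0..})"
    and cQ': "continuous_on {0..} Q'"
    and Qpos: "\<And>t. t \<ge> 0 \<Longrightarrow> Q t > 0"
    and lim: "(Q \<longlongrightarrow> 0) at_top"
    and ode: "\<And>t. t > 0 \<Longrightarrow> \<exists>Q''. (Q' has_real_derivative Q'') (at t) \<and>
              - Q'' - (2 / t) * Q' t + Q t - (Q t)^3 = 0"
    using gs unfolding is_ground_state_profile_def by auto
  have cQ: "continuous_on {0..} Q" by (rule gs_cont[OF gs])
  have cH: "continuous_on {0..} H" by (rule solves_cont[OF sH])
  have dH: "\<And>t. t > 0 \<Longrightarrow> (H has_real_derivative H' t) (at t)"
    using sH unfolding solves_H_def by (auto intro: deriv_at_pos)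
  have dH': "\<And>t. t > 0 \<Longrightarrow> (H' has_real_derivative (eps - (Q t)^2) * H t) (at t)"
    using sH unfolding solves_H_def by auto
  have H00: "H 0 = 0" using sH unfolding solves_H_def by auto
  define u where "u t = t * Q t" for t
  define u' where "u' t = Q t + t * Q' t" for t
  have upos: "\<And>t. t > 0 \<Longrightarrow> u t > 0" unfolding u_def using Qpos by simp
  have du: "(u has_real_derivative u' t) (at t)" if "t > 0" for t
  proof -
    have "(Q has_real_derivative Q' t) (at t)" using deriv_at_pos[OF dQ that] that by simp
    then have "((\<lambda>t. t * Q t) has_real_derivative (1 * Q t + t * Q' t)) (at t)"
      by (intro derivative_eq_intros) auto
    then show ?thesis unfolding u_def u'_def by simp
  qed
  have du': "(u' has_real_derivative u t * (1 - (Q t)^2)) (at t)" if tp: "t > 0" for t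
  proof -
    obtain Q'' where q1: "(Q' has_real_derivative Q'') (at t)"
      and q2: "- Q'' - (2 / t) * Q' t + Q t - (Q t)^3 = 0" using ode[OF tp] by blast
    have dq: "(Q has_real_derivative Q' t) (at t)" using deriv_at_pos[OF dQ] tp by simp
    have "((\<lambda>t. Q t + t * Q' t) has_real_derivative (Q' t + (1 * Q' t + Q'' * t))) (at t)"
      by (rule DERIV_add[OF dq DERIV_mult[OF DERIV_ident q1]])
    moreover have "Q' t + (1 * Q' t + Q'' * t) = u t * (1 - (Q t)^2)"
    proof -
      have "Q'' = - (2 / t) * Q' t + Q t - (Q t)^3" using q2 by linarith
      then show ?thesis unfolding u_def using that by (simp add: field_simps power2_eq_square power3_eq_cube)
    qed
    ultimately show ?thesis unfolding u'_def by simp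
  qed
  define W where "W t = H' t * u t - H t * u' t" for t
  have dW: "(W has_real_derivative (1 - eps) * (- H t) * u t) (at t)" if "t > 0" for t
  proof -
    have "(W has_real_derivative ((eps - (Q t)^2) * H t * u t + u' t * H' t - (H' t * u' t + u t * (1 - (Q t)^2) * H t))) (at t)"
      unfolding W_def by (rule DERIV_diff[OF DERIV_mult[OF dH'[OF that] du[OF that]] DERIV_mult[OF dH[OF that] du'[OF that]]])
    moreover have "(eps - (Q t)^2) * H t * u t + u' t * H' t - (H' t * u' t + u t * (1 - (Q t)^2) * H t) = (1 - eps) * (- H t) * u t"
      by (simp add: algebra_simps)
    ultimately show ?thesis by simp
  qed
  have Wdnn: "(1 - eps) * (- H t) * u t \<ge> 0" if "t > 0" for t
  proof -
    have "1 - eps \<ge> 0" "- H t \<ge> 0" "u t \<ge> 0" using e1 Hle[OF that] upos[OF that] by auto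
    then show ?thesis by (intro mult_nonneg_nonneg)
  qed
  have Wdpos: "(1 - eps) * (- H t) * u t > 0" if "t > 0" "t < s0" for t
  proof -
    have "1 - eps > 0" "- H t > 0" "u t > 0" using e1 neg[OF that] upos[OF that(1)] by auto
    then show ?thesis by (intro mult_pos_pos)
  qed
  have Wmono: "W a \<le> W b" if "0 < a" "a \<le> b" for a b
  proof (rule DERIV_nonneg_imp_nondecreasing[OF that(2)])
    fix x assume "a \<le> x" "x \<le> b"
    then have "x > 0" using that by simp
    then show "\<exists>y. (W has_real_derivative y) (at x) \<and> 0 \<le> y" using dW Wdnn by blast
  qed
  have Wstrict: "W a < W b" if "0 < a" "a < b" "b < s0" for a b
  proof (rule DERIV_pos_imp_increasing[OF that(2)])
    fix x assume "a \<le> x" "x \<le> b"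
    then have "x > 0" "x < s0" using that by auto
    then show "\<exists>y. (W has_real_derivative y) (at x) \<and> 0 < y" using dW Wdpos by blast
  qed
  obtain B where B: "\<And>t. 0 < t \<Longrightarrow> t \<le> 1 \<Longrightarrow> \<bar>H' t\<bar> \<le> B"
    using H'_bounded[OF sH cQ] by blast
  have limH: "(H \<longlongrightarrow> 0) (at_right 0)"
  proof -
    have "(H \<longlongrightarrow> H 0) (at 0 within {0..})" using cH by (simp add: continuous_on_def)
    then have "(H \<longlongrightarrow> H 0) (at 0 within {0<..})" by (rule tendsto_within_subset) auto
    then show ?thesis using H00 by simp
  qed
  have limQ: "(Q \<longlongrightarrow> Q 0) (at_right 0)"
  proof -
    have "(Q \<longlongrightarrow> Q 0) (at 0 within {0..})" using cQ by (simp add: continuous_on_def)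
    then show ?thesis by (rule tendsto_within_subset) auto
  qed
  have limQ': "(Q' \<longlongrightarrow> Q' 0) (at_right 0)"
  proof -
    have "(Q' \<longlongrightarrow> Q' 0) (at 0 within {0..})" using cQ' by (simp add: continuous_on_def)
    then show ?thesis by (rule tendsto_within_subset) auto
  qed
  have limu: "(u \<longlongrightarrow> 0) (at_right 0)"
  proof -
    have "((\<lambda>t. t * Q t) \<longlongrightarrow> 0 * Q 0) (at_right 0)"
      by (intro tendsto_intros limQ)
    then show ?thesis unfolding u_def by simp
  qed
  have limu': "(u' \<longlongrightarrow> Q 0 + 0 * Q' 0) (at_right 0)"
    unfolding u'_def by (intro tendsto_intros limQ limQ')
  have lim1: "((\<lambda>t. H' t * u t) \<longlongrightarrow> 0) (at_right 0)"
  proof (rule Lim_null_comparison)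
    have "eventually (\<lambda>t. 0 < t \<and> t \<le> 1) (at_right (0::real))"
      unfolding eventually_at_right_field by (intro exI[of _ 1]) auto
    then show "eventually (\<lambda>t. norm (H' t * u t) \<le> B * \<bar>u t\<bar>) (at_right 0)"
      by eventually_elim (auto simp: abs_mult intro!: mult_right_mono B)
    show "((\<lambda>t. B * \<bar>u t\<bar>) \<longlongrightarrow> 0) (at_right 0)"
      using tendsto_mult[OF tendsto_const tendsto_rabs[OF limu], of B] by simp
  qed
  have lim2: "((\<lambda>t. H t * u' t) \<longlongrightarrow> 0 * (Q 0 + 0 * Q' 0)) (at_right 0)"
    by (intro tendsto_intros limH limu')
  have limW: "(W \<longlongrightarrow> 0) (at_right 0)"
    unfolding W_def using tendsto_diff[OF lim1 lim2] by simp
  have Wnn: "W t \<ge> 0" if "t > 0" for t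
  proof (rule tendsto_le[OF trivial_limit_at_right_real tendsto_const limW])
    show "eventually (\<lambda>x. W x \<le> W t) (at_right 0)"
      unfolding eventually_at_right_field using that
      by (intro exI[of _ t]) (auto intro: Wmono)
  qed
  define c where "c = W (s0/2)"
  have cpos: "c > 0" unfolding c_def using Wstrict[of "s0/4" "s0/2"] Wnn[of "s0/4"] s0 by simp
  \<comment> \<open>convexity of u at infinity\<close>
  have "eventually (\<lambda>t. Q t < 1) at_top"
    using lim by (intro order_tendstoD) auto
  then obtain T0 where T0: "\<And>t. t \<ge> T0 \<Longrightarrow> Q t < 1"
    unfolding eventually_at_top_linorder by blast
  define T where "T = max T0 1"
  have T1: "T \<ge> 1" and QT: "\<And>t. t \<ge> T \<Longrightarrow> Q t < 1" using T0 unfolding T_def by auto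
  have u''pos: "u t * (1 - (Q t)^2) \<ge> 0" if "t \<ge> T" for t
  proof -
    have "t > 0" using that T1 by simp
    then have "0 < Q t" "Q t < 1" using Qpos QT that by auto
    then have "(Q t)^2 < 1" by (simp add: power_less_one_iff)
    then show ?thesis using upos[OF \<open>t > 0\<close>] by simp
  qed
  have u'mono: "u' a \<le> u' b" if "T \<le> a" "a \<le> b" for a b
    using that T1
    by (intro DERIV_nonneg_imp_nondecreasing[of a b u'])
       (auto intro!: exI[of _ "u _ * (1 - (Q _)^2)"] du' u''pos)
  have u'np: "u' t \<le> 0" if "t \<ge> T" for t
  proof (rule ccontr)
    assume "\<not> u' t \<le> 0"
    then have m: "u' t > 0" by simp
    define m where "m = u' t"
    have lin: "u s - m * s \<ge> u t - m * t" if "s \<ge> t" for s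
      using that \<open>t \<ge> T\<close> T1
      by (intro DERIV_nonneg_imp_nondecreasing[of t s "\<lambda>s. u s - m * s"])
         (auto intro!: exI[of _ "u' _ - m * 1"] derivative_eq_intros du simp: m_def u'mono)
    have "eventually (\<lambda>s. Q s < m/2) at_top"
      using lim m unfolding m_def by (intro order_tendstoD) auto
    moreover have "eventually (\<lambda>s. s \<ge> 2 * t) at_top" by simp
    ultimately have "eventually (\<lambda>s. Q s < m/2 \<and> s \<ge> 2 * t) at_top" by eventually_elim auto
    then obtain N where N: "\<And>s. s \<ge> N \<Longrightarrow> Q s < m/2 \<and> s \<ge> 2 * t"
      unfolding eventually_at_top_linorder by blast
    define s where "s = N"
    have s: "Q s < m/2" "s \<ge> 2 * t" using N[of N] unfolding s_def by auto
    have tpos: "t > 0" using \<open>t \<ge> T\<close> T1 by simp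
    have "u t > 0" using upos[OF tpos] .
    then have a1: "u s > m * s - m * t" using lin[of s] s tpos by simp
    have a2: "m * t \<le> m * s / 2" using s m unfolding m_def by simp
    have "s * (m/2) = m * s / 2" by simp
    then have "s * Q s > s * (m/2)" using a1 a2 unfolding u_def by linarith
    then have "Q s > m/2" using s tpos by simp
    then show False using s by simp
  qed
  define M where "M = u T"
  have Mpos: "M > 0" unfolding M_def using upos T1 by simp
  have uleM: "u t \<le> M" if "t \<ge> T" for t
  proof -
    have "- u T \<le> - u t"
      using that T1
      by (intro DERIV_nonneg_imp_nondecreasing[of T t "\<lambda>s. - u s"])
         (auto intro!: exI[of _ "- u' _"] derivative_eq_intros du simp: u'np)
    then show ?thesis unfolding M_def by simp
  qed
  define T2 where "T2 = max T (s0/2)"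
  have T2pos: "T2 > 0" unfolding T2_def using T1 by simp
  define g where "g t = H t / u t - (c / M^2) * t" for t
  have gmono: "g T2 \<le> g t" if "T2 \<le> t" for t
  proof (rule DERIV_nonneg_imp_nondecreasing[OF that])
    fix x assume x: "T2 \<le> x" "x \<le> t"
    have xpos: "x > 0" using x T2pos by simp
    have ux: "u x > 0" "u x \<le> M" using upos[OF xpos] uleM[of x] x unfolding T2_def by auto
    have Wx: "W x \<ge> c" unfolding c_def using Wmono[of "s0/2" x] x s0 unfolding T2_def by simp
    have dl: "((\<lambda>t. (c / M^2) * t) has_real_derivative (c / M^2)) (at x)"
      using DERIV_cmult[OF DERIV_ident, of "c / M^2"] by simp
    have "(g has_real_derivative (H' x * u x - H x * u' x) / (u x * u x) - c / M^2) (at x)"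
      unfolding g_def by (rule DERIV_diff[OF DERIV_divide[OF dH[OF xpos] du[OF xpos]] dl]) (use ux in auto)
    moreover have "(H' x * u x - H x * u' x) / (u x * u x) - c / M^2 \<ge> 0"
    proof -
      have "c / M^2 \<le> c / (u x * u x)"
        using ux cpos by (intro divide_left_mono) (auto simp: power2_eq_square intro: mult_mono)
      also have "\<dots> \<le> W x / (u x * u x)" using Wx ux by (intro divide_right_mono) auto
      finally show ?thesis unfolding W_def by simp
    qed
    ultimately show "\<exists>y. (g has_real_derivative y) (at x) \<and> 0 \<le> y" by blast
  qed
  define t where "t = T2 + M^2 * (\<bar>g T2\<bar> + 1) / c"
  have tge: "t \<ge> T2" unfolding t_def using cpos by simp
  have tpos: "t > 0" using tge T2pos by simp
  have "H t / u t = g t + (c / M^2) * t" unfolding g_def by simp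
  also have "\<dots> \<ge> g T2 + (c / M^2) * t" using gmono[OF tge] by simp
  finally have A: "H t / u t \<ge> g T2 + (c / M^2) * t" .
  have "(c / M^2) * t = (c / M^2) * T2 + (\<bar>g T2\<bar> + 1)"
    unfolding t_def using cpos Mpos by (simp add: field_simps)
  moreover have "(c / M^2) * T2 \<ge> 0" using cpos T2pos by simp
  ultimately have "H t / u t > 0" using A by linarith
  moreover have "H t / u t \<le> 0" using Hle[OF tpos] upos[OF tpos] by (simp add: divide_nonpos_pos)
  ultimately show False by simp
qed



lemma first_zero_exists:
  assumes sH: "solves_H Q eps H H'" and b: "b > 0" "H b > 0"
  shows "\<exists>\<tau>. first_pos_zero H \<tau> \<and> (\<forall>s. 0 < s \<and> s < \<tau> \<longrightarrow> H s < 0)"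
proof -
  obtain s0 where s0: "s0 > 0" and neg: "\<And>t. 0 < t \<Longrightarrow> t < s0 \<Longrightarrow> H t < 0"
    using neg_near0[OF sH] by blast
  have cH: "continuous_on {0..} H" by (rule solves_cont[OF sH])
  define s1 where "s1 = s0 / 2"
  have s1: "0 < s1" "s1 < s0" using s0 unfolding s1_def by auto
  have bs0: "b \<ge> s0" using neg[of b] b by force
  have Hs1: "H s1 < 0" using neg s1 by simp
  define S where "S = {s1..b} \<inter> H -` {0}"
  have cHs: "\<And>x y. 0 < x \<Longrightarrow> continuous_on {x..y} H"
    by (rule continuous_on_subset[OF cH]) auto
  have clS: "closed S" unfolding S_def
    by (rule continuous_closed_preimage[OF cHs[OF s1(1)]]) auto
  obtain z where z: "s1 \<le> z" "z \<le> b" "H z = 0"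
    using IVT'[of H s1 0 b] Hs1 b bs0 s1 cHs[OF s1(1), of b] by auto
  have neS: "S \<noteq> {}" unfolding S_def using z by auto
  have bdd: "bdd_below S" unfolding S_def by (auto intro: bdd_belowI[of _ s1])
  define \<tau> where "\<tau> = Inf S"
  have \<tau>S: "\<tau> \<in> S" unfolding \<tau>_def by (rule closed_contains_Inf[OF neS bdd clS])
  then have \<tau>: "s1 \<le> \<tau>" "\<tau> \<le> b" "H \<tau> = 0" unfolding S_def by auto
  have lower: "\<tau> \<le> x" if "x \<in> S" for x unfolding \<tau>_def using that bdd by (rule cInf_lower)
  have negall: "H s < 0" if "0 < s" "s < \<tau>" for s
  proof (cases "s < s0")
    case True then show ?thesis using neg that by simp
  next
    case False
    show ?thesis
    proof (rule ccontr)
      assume "\<not> H s < 0"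
      then obtain x where x: "s1 \<le> x" "x \<le> s" "H x = 0"
        using IVT'[of H s1 0 s] Hs1 False s1 cHs[OF s1(1), of s] by auto
      then have "x \<in> S" unfolding S_def using that \<tau> by auto
      then have "\<tau> \<le> x" by (rule lower)
      then show False using x that by simp
    qed
  qed
  show ?thesis
    unfolding first_pos_zero_def using \<tau> s1 negall by (intro exI[of _ \<tau>]) force
qed



lemma compare_zeros:
  assumes gs: "is_ground_state_profile Q Q'" and e0: "0 \<le> eps"
    and sH: "solves_H Q eps H H'" and sH0: "solves_H Q 0 H0 H0'"
    and te: "\<tau>e > 0" "H \<tau>e = 0" "\<And>s. 0 < s \<Longrightarrow> s < \<tau>e \<Longrightarrow> H s < 0"
    and t0: "\<And>s. 0 < s \<Longrightarrow> s < \<tau>0 \<Longrightarrow> H0 s < 0"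
  shows "\<tau>0 \<le> \<tau>e"
proof (rule ccontr)
  assume "\<not> \<tau>0 \<le> \<tau>e"
  then have lt: "\<tau>e < \<tau>0" by simp
  have cQ: "continuous_on {0..} Q" by (rule gs_cont[OF gs])
  have cH: "continuous_on {0..} H" by (rule solves_cont[OF sH])
  have cH0: "continuous_on {0..} H0" by (rule solves_cont[OF sH0])
  have dH: "\<And>t. t > 0 \<Longrightarrow> (H has_real_derivative H' t) (at t)"
    using sH unfolding solves_H_def by (auto intro: deriv_at_pos)
  have dH': "\<And>t. t > 0 \<Longrightarrow> (H' has_real_derivative (eps - (Q t)^2) * H t) (at t)"
    using sH unfolding solves_H_def by auto
  have dH0: "\<And>t. t > 0 \<Longrightarrow> (H0 has_real_derivative H0' t) (at t)"
    using sH0 unfolding solves_H_def by (auto intro: deriv_at_pos)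
  have dH0': "\<And>t. t > 0 \<Longrightarrow> (H0' has_real_derivative (0 - (Q t)^2) * H0 t) (at t)"
    using sH0 unfolding solves_H_def by auto
  have H00: "H 0 = 0" "H0 0 = 0" using sH sH0 unfolding solves_H_def by auto
  define V where "V t = H0' t * H t - H0 t * H' t" for t
  have dV: "(V has_real_derivative (- eps * H0 t * H t)) (at t)" if "t > 0" for t
  proof -
    have "(V has_real_derivative ((0 - (Q t)^2) * H0 t * H t + H' t * H0' t - (H0' t * H' t + (eps - (Q t)^2) * H t * H0 t))) (at t)"
      unfolding V_def by (rule DERIV_diff[OF DERIV_mult[OF dH0'[OF that] dH[OF that]] DERIV_mult[OF dH0[OF that] dH'[OF that]]])
    moreover have "(0 - (Q t)^2) * H0 t * H t + H' t * H0' t - (H0' t * H' t + (eps - (Q t)^2) * H t * H0 t) = - eps * H0 t * H t"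
      by (simp add: algebra_simps)
    ultimately show ?thesis by simp
  qed
  have HHnn: "H0 t * H t \<ge> 0" if "0 < t" "t \<le> \<tau>e" for t
  proof (cases "t = \<tau>e")
    case True then show ?thesis using te by simp
  next
    case False
    then have "H t < 0" "H0 t < 0" using te t0 that lt by auto
    then show ?thesis by (simp add: zero_le_mult_iff)
  qed
  have Vmono: "V b \<le> V a" if "0 < a" "a \<le> b" "b \<le> \<tau>e" for a b
  proof -
    have "- V a \<le> - V b"
    proof (rule DERIV_nonneg_imp_nondecreasing[OF that(2)])
      fix x assume x: "a \<le> x" "x \<le> b"
      then have xp: "x > 0" using that by simp
      have "((\<lambda>t. - V t) has_real_derivative - (- eps * H0 x * H x)) (at x)"
        by (rule DERIV_minus[OF dV[OF xp]])
      moreover have "- (- eps * H0 x * H x) \<ge> 0"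
        using HHnn[of x] x that xp e0 by (simp add: mult.assoc)
      ultimately show "\<exists>y. ((\<lambda>t. - V t) has_real_derivative y) (at x) \<and> 0 \<le> y" by blast
    qed
    then show ?thesis by simp
  qed
  obtain B where B: "\<And>t. 0 < t \<Longrightarrow> t \<le> 1 \<Longrightarrow> \<bar>H' t\<bar> \<le> B"
    using H'_bounded[OF sH cQ] by blast
  obtain B0 where B0: "\<And>t. 0 < t \<Longrightarrow> t \<le> 1 \<Longrightarrow> \<bar>H0' t\<bar> \<le> B0"
    using H'_bounded[OF sH0 cQ] by blast
  have limH: "(H \<longlongrightarrow> 0) (at_right 0)"
  proof -
    have "(H \<longlongrightarrow> H 0) (at 0 within {0..})" using cH by (simp add: continuous_on_def)
    then have "(H \<longlongrightarrow> H 0) (at 0 within {0<..})" by (rule tendsto_within_subset) auto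
    then show ?thesis using H00 by simp
  qed
  have limH0: "(H0 \<longlongrightarrow> 0) (at_right 0)"
  proof -
    have "(H0 \<longlongrightarrow> H0 0) (at 0 within {0..})" using cH0 by (simp add: continuous_on_def)
    then have "(H0 \<longlongrightarrow> H0 0) (at 0 within {0<..})" by (rule tendsto_within_subset) auto
    then show ?thesis using H00 by simp
  qed
  have ev01: "eventually (\<lambda>t. 0 < t \<and> t \<le> 1) (at_right (0::real))"
    unfolding eventually_at_right_field by (intro exI[of _ 1]) auto
  have lim1: "((\<lambda>t. H0' t * H t) \<longlongrightarrow> 0) (at_right 0)"
  proof (rule Lim_null_comparison)
    show "eventually (\<lambda>t. norm (H0' t * H t) \<le> B0 * \<bar>H t\<bar>) (at_right 0)"
      using ev01 by eventually_elim (auto simp: abs_mult intro!: mult_right_mono B0)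
    show "((\<lambda>t. B0 * \<bar>H t\<bar>) \<longlongrightarrow> 0) (at_right 0)"
      using tendsto_mult[OF tendsto_const tendsto_rabs[OF limH], of B0] by simp
  qed
  have lim2: "((\<lambda>t. H0 t * H' t) \<longlongrightarrow> 0) (at_right 0)"
  proof (rule Lim_null_comparison)
    show "eventually (\<lambda>t. norm (H0 t * H' t) \<le> B * \<bar>H0 t\<bar>) (at_right 0)"
      using ev01 by eventually_elim (auto simp: abs_mult mult.commute intro!: mult_right_mono B)
    show "((\<lambda>t. B * \<bar>H0 t\<bar>) \<longlongrightarrow> 0) (at_right 0)"
      using tendsto_mult[OF tendsto_const tendsto_rabs[OF limH0], of B] by simp
  qed
  have limV: "(V \<longlongrightarrow> 0) (at_right 0)"
    unfolding V_def using tendsto_diff[OF lim1 lim2] by simp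
  have Vte: "V \<tau>e \<le> 0"
  proof (rule tendsto_le[OF trivial_limit_at_right_real limV tendsto_const])
    show "eventually (\<lambda>x. V \<tau>e \<le> V x) (at_right 0)"
      unfolding eventually_at_right_field using te(1)
      by (intro exI[of _ \<tau>e]) (auto intro: Vmono)
  qed
  have H0te: "H0 \<tau>e < 0" using t0 te lt by simp
  have H'te: "H' \<tau>e \<ge> 0"
  proof (rule ccontr)
    assume "\<not> H' \<tau>e \<ge> 0"
    then obtain d where d: "d > 0" "\<And>h. h > 0 \<Longrightarrow> h < d \<Longrightarrow> H \<tau>e < H (\<tau>e - h)"
      using DERIV_neg_dec_left[OF dH[OF te(1)]] by auto
    define h where "h = min d \<tau>e / 2"
    have h: "h > 0" "h < d" "h < \<tau>e" unfolding h_def using d te by auto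
    have "H (\<tau>e - h) > 0" using d(2)[OF h(1,2)] te by simp
    moreover have "H (\<tau>e - h) < 0" using te(3)[of "\<tau>e - h"] h by simp
    ultimately show False by simp
  qed
  have "V \<tau>e = - H0 \<tau>e * H' \<tau>e" unfolding V_def using te by simp
  then have H'0: "H' \<tau>e = 0" using Vte H0te H'te
    by (smt (verit) mult_pos_pos)
  \<comment> \<open>backward uniqueness (Gronwall)\<close>
  have "continuous_on {0..\<tau>e} Q" by (rule continuous_on_subset[OF cQ]) auto
  then obtain Bq where Bq: "\<And>x. x \<in> {0..\<tau>e} \<Longrightarrow> \<bar>Q x\<bar> \<le> Bq"
    using bounded_on_compact by blast
  define L where "L = 1 + eps + Bq^2"
  define F where "F t = (H t * H t + H' t * H' t) * exp (L * t)" for t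
  have Fmono: "F a \<le> F b" if "0 < a" "a \<le> b" "b \<le> \<tau>e" for a b
  proof (rule DERIV_nonneg_imp_nondecreasing[OF that(2)])
    fix x assume x: "a \<le> x" "x \<le> b"
    then have xp: "x > 0" using that by simp
    define P where "P = (eps - (Q x)^2)"
    have dE: "((\<lambda>t. H t * H t + H' t * H' t) has_real_derivative
        (H' x * H x + H' x * H x + (P * H x * H' x + P * H x * H' x))) (at x)"
      unfolding P_def
      by (rule DERIV_add[OF DERIV_mult[OF dH[OF xp] dH[OF xp]] DERIV_mult[OF dH'[OF xp] dH'[OF xp]]])
    have dexp: "((\<lambda>t. exp (L * t)) has_real_derivative exp (L * x) * L) (at x)"
      using DERIV_chain2[OF DERIV_exp DERIV_cmult[OF DERIV_ident, of L]] by simp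
    have dF: "(F has_real_derivative
        ((H' x * H x + H' x * H x + (P * H x * H' x + P * H x * H' x)) * exp (L * x)
         + exp (L * x) * L * (H x * H x + H' x * H' x))) (at x)"
      unfolding F_def by (rule DERIV_mult[OF dE dexp])
    have key: "(H' x * H x + H' x * H x + (P * H x * H' x + P * H x * H' x))
         + L * (H x * H x + H' x * H' x) \<ge> 0"
    proof -
      have xin: "x \<in> {0..\<tau>e}" using x that xp by auto
      have q2: "(Q x)^2 \<le> Bq^2"
      proof -
        have "\<bar>Q x\<bar>^2 \<le> Bq^2" using Bq[OF xin] by (intro power_mono) auto
        then show ?thesis by simp
      qed
      have aP: "\<bar>1 + P\<bar> \<le> L" unfolding P_def L_def using e0 q2 by (smt (verit) zero_le_power2)
      have am: "2 * \<bar>H x * H' x\<bar> \<le> H x * H x + H' x * H' x"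
      proof -
        have "0 \<le> (\<bar>H x\<bar> - \<bar>H' x\<bar>)^2" by simp
        then show ?thesis by (simp add: power2_eq_square algebra_simps abs_mult)
      qed
      have eq: "H' x * H x + H' x * H x + (P * H x * H' x + P * H x * H' x) = (1 + P) * (2 * (H x * H' x))"
        by (simp add: algebra_simps)
      have "\<bar>(1 + P) * (2 * (H x * H' x))\<bar> = \<bar>1 + P\<bar> * (2 * \<bar>H x * H' x\<bar>)" by (simp add: abs_mult)
      also have "\<dots> \<le> L * (H x * H x + H' x * H' x)"
        using aP by (intro mult_mono aP am) auto
      finally show ?thesis unfolding eq by linarith
    qed
    have "((H' x * H x + H' x * H x + (P * H x * H' x + P * H x * H' x)) * exp (L * x)
         + exp (L * x) * L * (H x * H x + H' x * H' x))
        = exp (L * x) * ((H' x * H x + H' x * H x + (P * H x * H' x + P * H x * H' x))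
         + L * (H x * H x + H' x * H' x))" by (simp add: algebra_simps)
    also have "\<dots> \<ge> 0" using key by simp
    finally show "\<exists>y. (F has_real_derivative y) (at x) \<and> 0 \<le> y" using dF by auto
  qed
  have "F \<tau>e = 0" unfolding F_def using te H'0 by simp
  moreover have "F (\<tau>e/2) > 0"
  proof -
    have "H (\<tau>e/2) < 0" using te by simp
    then have "H (\<tau>e/2) * H (\<tau>e/2) > 0" by (simp add: mult_neg_neg)
    moreover have "H' (\<tau>e/2) * H' (\<tau>e/2) \<ge> 0" by simp
    ultimately have "H (\<tau>e/2) * H (\<tau>e/2) + H' (\<tau>e/2) * H' (\<tau>e/2) > 0" by linarith
    then show ?thesis unfolding F_def by simp
  qed
  moreover have "F (\<tau>e/2) \<le> F \<tau>e" using Fmono[of "\<tau>e/2" \<tau>e] te by simp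
  ultimately show False by simp
qed


theorem lemma7p1:
  fixes Q Q' H H' H0 H0' :: "real \<Rightarrow> real" and eps :: real
  assumes "is_ground_state_profile Q Q'"
    and "0 \<le> eps" and "eps < 1"
    and "solves_H Q eps H H'"
    and "solves_H Q 0 H0 H0'"
  shows "(\<exists>a b. 0 < a \<and> a < b \<and> H a * H b < 0) \<and>
         (\<exists>\<tau>\<epsilon> \<tau>0. first_pos_zero H \<tau>\<epsilon> \<and> first_pos_zero H0 \<tau>0 \<and> 0 < \<tau>0 \<and> \<tau>0 \<le> \<tau>\<epsilon>)"
proof -
  obtain b where b: "b > 0" "H b > 0" using sign_change[OF assms(1,2,3,4)] by blast
  obtain b0 where b0: "b0 > 0" "H0 b0 > 0" using sign_change[OF assms(1) order_refl _ assms(5)] by auto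
  obtain s0 where s0: "s0 > 0" and neg: "\<And>t. 0 < t \<Longrightarrow> t < s0 \<Longrightarrow> H t < 0"
    using neg_near0[OF assms(4)] by blast
  have part1: "\<exists>a b. 0 < a \<and> a < b \<and> H a * H b < 0"
  proof (intro exI conjI)
    define a where "a = min s0 b / 2"
    show "0 < a" "a < b" unfolding a_def using s0 b by auto
    have "H a < 0" using neg[of a] s0 b unfolding a_def by auto
    then show "H a * H b < 0" using b by (simp add: mult_neg_pos)
  qed
  obtain te where te: "first_pos_zero H te" "\<forall>s. 0 < s \<and> s < te \<longrightarrow> H s < 0"
    using first_zero_exists[OF assms(4) b] by blast
  obtain t0 where t0: "first_pos_zero H0 t0" "\<forall>s. 0 < s \<and> s < t0 \<longrightarrow> H0 s < 0"
    using first_zero_exists[OF assms(5) b0] by blast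
  have "t0 \<le> te"
    using te t0 unfolding first_pos_zero_def
    by (intro compare_zeros[OF assms(1,2,4,5)]) auto
  then show ?thesis using part1 te t0 unfolding first_pos_zero_def by blast
qed

end
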